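(* The following two statements are equivalent: (A) for every $n\ge 1$, every antipodal $2$-colouring of $E(Q_n)$ contains a monochromatic geodesic between some pair of antipodal vertices; (B) for every $n\ge 1$, in every $2$-colouring of $E(Q_n)$ there is a geodesic between some pair of antipodal vertices which changes colour at most once.
   Context: The hypercube $Q_n$ has vertex set $\{0,1\}^n$, two vertices adjacent iff they differ in exactly one coordinate; the direction of an edge is that coordinate. A path is a geodesic if no two of its edges have the same direction. The antipodal vertex $x'$ of $x$ is the vertex differing from $x$ in every coordinate; the antipodal edge of $e=xy$ is $x'y'$. A $2$-colouring of $E(Q_n)$ is antipodal if no two antipodal edges receive the same colour. A path changes colour at most once if its edge sequence consists of an (possibly empty) initial segment of one colour followed by a segment of the other colour. *)

theory Defs
  imports Main
begin

text \<open>A 2-colouring of E(Q_n) is any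
function from vertex sets to bool (only its values on edges matter).\<close>

definition cube_vertices :: "nat \<Rightarrow> bool list set" where
  "cube_vertices n = {x. length x = n}"

definition adjacent :: "nat \<Rightarrow> bool list \<Rightarrow> bool list \<Rightarrow> bool" where
  "adjacent n x y \<longleftrightarrow> x \<in> cube_vertices n \<and> y \<in> cube_vertices n \<and>
     card {i. i < n \<and> x ! i \<noteq> y ! i} = 1"

definition cube_edges :: "nat \<Rightarrow> bool list set set" where
  "cube_edges n = {{x, y} | x y. adjacent n x y}"

definition antipode :: "bool list \<Rightarrow> bool list" where
  "antipode x = map Not x"

definition antipodal_edge :: "bool list set \<Rightarrow> bool list set" where
  "antipodal_edge e = antipode ` e"

definition antipodal_colouring :: "nat \<Rightarrow> (bool list set \<Rightarrow> bool) \<Rightarrow> bool" where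
  "antipodal_colouring n c \<longleftrightarrow> (\<forall>e \<in> cube_edges n. c e \<noteq> c (antipodal_edge e))"

definition direction :: "bool list \<Rightarrow> bool list \<Rightarrow> nat" where
  "direction x y = (THE i. i < length x \<and> x ! i \<noteq> y ! i)"

definition is_path :: "nat \<Rightarrow> bool list list \<Rightarrow> bool" where
  "is_path n p \<longleftrightarrow> p \<noteq> [] \<and> set p \<subseteq> cube_vertices n \<and>
     (\<forall>i. Suc i < length p \<longrightarrow> adjacent n (p ! i) (p ! Suc i))"

definition path_edges :: "bool list list \<Rightarrow> bool list set list" where
  "path_edges p = map (\<lambda>i. {p ! i, p ! Suc i}) [0..<length p - 1]"

definition path_directions :: "bool list list \<Rightarrow> nat list" where
  "path_directions p = map (\<lambda>i. direction (p ! i) (p ! Suc i)) [0..<length p - 1]"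

definition geodesic :: "nat \<Rightarrow> bool list list \<Rightarrow> bool" where
  "geodesic n p \<longleftrightarrow> is_path n p \<and> distinct (path_directions p)"

definition geodesic_between :: "nat \<Rightarrow> bool list list \<Rightarrow> bool list \<Rightarrow> bool list \<Rightarrow> bool" where
  "geodesic_between n p x y \<longleftrightarrow> geodesic n p \<and> hd p = x \<and> last p = y"

definition monochromatic :: "(bool list set \<Rightarrow> bool) \<Rightarrow> bool list list \<Rightarrow> bool" where
  "monochromatic c p \<longleftrightarrow> (\<exists>b. \<forall>e \<in> set (path_edges p). c e = b)"

definition changes_colour_at_most_once :: "(bool list set \<Rightarrow> bool) \<Rightarrow> bool list list \<Rightarrow> bool" where
  "changes_colour_at_most_once c p \<longleftrightarrow>
     (\<exists>b k m. map c (path_edges p) = replicate k b @ replicate m (\<not> b))"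

end

theory Submission imports Defs begin

lemma adj_dir:
  assumes "adjacent n a b"
  shows "length a = n" "length b = n" "direction a b < n"
    "a ! direction a b \<noteq> b ! direction a b"
    "\<And>i. i < n \<Longrightarrow> i \<noteq> direction a b \<Longrightarrow> a!i = b!i"
proof -
  have la: "length a = n" and lb: "length b = n"
    using assms by (auto simp: adjacent_def cube_vertices_def)
  from assms have "card {i. i < n \<and> a ! i \<noteq> b ! i} = 1" by (simp add: adjacent_def)
  then obtain d where S: "{i. i < n \<and> a ! i \<noteq> b ! i} = {d}" by (rule card_1_singletonE)
  have dd: "direction a b = d"
    unfolding direction_def
  proof (rule the_equality)
    show "d < length a \<and> a ! d \<noteq> b ! d" using S la by auto
    fix j assume "j < length a \<and> a ! j \<noteq> b ! j"
    then have "j \<in> {i. i < n \<and> a ! i \<noteq> b ! i}" using la by auto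
    then show "j = d" using S by auto
  qed
  show "length a = n" "length b = n" by fact+
  show "direction a b < n" "a ! direction a b \<noteq> b ! direction a b" using S dd by auto
  fix i assume "i < n" "i \<noteq> direction a b"
  then show "a!i = b!i" using S dd by auto
qed

lemma adj_intro:
  assumes "length a = n" "length b = n" "d < n" "a!d \<noteq> b!d" "\<And>i. i<n \<Longrightarrow> i\<noteq>d \<Longrightarrow> a!i = b!i"
  shows "adjacent n a b" "direction a b = d"
proof -
  have S: "{i. i < n \<and> a ! i \<noteq> b ! i} = {d}" using assms by auto
  then show "adjacent n a b" using assms by (simp add: adjacent_def cube_vertices_def)
  show "direction a b = d" unfolding direction_def
    by (rule the_equality) (use assms S in auto)
qed

lemma antipode_antipode[simp]: "antipode (antipode x) = x"
  by (simp add: antipode_def comp_def)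

lemma length_antipode[simp]: "length (antipode x) = length x"
  by (simp add: antipode_def)

lemma adj_antipode:
  assumes "adjacent n a b"
  shows "adjacent n (antipode a) (antipode b)" "direction (antipode a) (antipode b) = direction a b"
proof -
  note D = adj_dir[OF assms]
  have "adjacent n (antipode a) (antipode b) \<and> direction (antipode a) (antipode b) = direction a b"
    using adj_intro[of "antipode a" n "antipode b" "direction a b"] D
    by (auto simp: antipode_def)
  then show "adjacent n (antipode a) (antipode b)" "direction (antipode a) (antipode b) = direction a b"
    by auto
qed

lemma adj_tl_same:
  assumes "adjacent (Suc n) a b" "hd a = hd b"
  shows "adjacent n (tl a) (tl b)" "direction (tl a) (tl b) = direction a b - 1" "direction a b \<noteq> 0"
proof -
  note D = adj_dir[OF assms(1)]
  have a0: "a ! 0 = hd a" "b ! 0 = hd b" using D(1,2) by (cases a; cases b; auto)+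
  show nz: "direction a b \<noteq> 0" proof assume "direction a b = 0" then show False using D(4) a0 assms(2) by simp qed
  have "adjacent n (tl a) (tl b) \<and> direction (tl a) (tl b) = direction a b - 1"
  proof -
    have h1: "length (tl a) = n" "length (tl b) = n" using D by auto
    have h2: "direction a b - 1 < n" using D(3) nz by auto
    have h3: "tl a ! (direction a b - 1) \<noteq> tl b ! (direction a b - 1)"
        using D(1,2,3,4) nz by (simp add: nth_tl)
    have h4: "\<And>i. i < n \<Longrightarrow> i \<noteq> direction a b - 1 \<Longrightarrow> tl a ! i = tl b ! i"
      using D(1,2) D(5) nz by (simp add: nth_tl)
    note adj_intro[OF h1 h2 h3 h4]
    then show ?thesis by simp
  qed
  then show "adjacent n (tl a) (tl b)" "direction (tl a) (tl b) = direction a b - 1" by auto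
qed

lemma adj_tl_diff:
  assumes "adjacent (Suc n) a b" "hd a \<noteq> hd b"
  shows "direction a b = 0" "tl a = tl b"
proof -
  note D = adj_dir[OF assms(1)]
  have a0: "a ! 0 = hd a" "b ! 0 = hd b" using D(1,2) by (cases a; cases b; auto)+
  show d0: "direction a b = 0" using D(5)[of 0] a0 assms(2) by auto
  show "tl a = tl b"
    by (rule nth_equalityI) (use D d0 in \<open>auto simp: nth_tl\<close>)
qed

definition prs :: "'a list \<Rightarrow> ('a \<times> 'a) list" where "prs p = zip p (tl p)"
definition dirs where "dirs p = map (\<lambda>(a,b). direction a b) (prs p)"
definition edg where "edg p = map (\<lambda>(a,b). {a,b}) (prs p)"

lemma path_edges_edg: "path_edges p = edg p"
  by (rule nth_equalityI) (auto simp: path_edges_def edg_def prs_def nth_tl)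

lemma path_directions_dirs: "path_directions p = dirs p"
  by (rule nth_equalityI) (auto simp: path_directions_def dirs_def prs_def nth_tl)

lemma is_path_prs: "is_path n p \<longleftrightarrow> p \<noteq> [] \<and> set p \<subseteq> cube_vertices n \<and> (\<forall>(a,b)\<in>set (prs p). adjacent n a b)"
proof -
  have "(\<forall>(a,b)\<in>set (prs p). adjacent n a b) \<longleftrightarrow> (\<forall>i. Suc i < length p \<longrightarrow> adjacent n (p ! i) (p ! Suc i))"
  proof
    assume H: "\<forall>(a,b)\<in>set (prs p). adjacent n a b"
    show "\<forall>i. Suc i < length p \<longrightarrow> adjacent n (p ! i) (p ! Suc i)"
    proof (intro allI impI)
      fix i assume "Suc i < length p"
      then have "(p ! i, p ! Suc i) \<in> set (prs p)"
        unfolding prs_def set_zip by (auto simp: nth_tl intro!: exI[of _ i])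
      then show "adjacent n (p ! i) (p ! Suc i)" using H by auto
    qed
  qed (auto simp: prs_def set_zip nth_tl)
  then show ?thesis by (simp add: is_path_def)
qed

lemma length_edg: "length (edg p) = length p - 1"
  by (simp add: edg_def prs_def)

lemma prs_conc:
  assumes "P \<noteq> []" "Q \<noteq> []" "last P = hd Q"
  shows "prs (P @ tl Q) = prs P @ prs Q"
  using assms
proof (induction P)
  case Nil then show ?case by simp
next
  case (Cons a P)
  show ?case
  proof (cases "P = []")
    case True
    then show ?thesis using Cons.prems by (cases Q) (auto simp: prs_def)
  next
    case False
    then have "prs (P @ tl Q) = prs P @ prs Q" using Cons by auto
    then show ?thesis using False by (cases P) (auto simp: prs_def)
  qed
qed

lemma prs_map: "prs (map f p) = map (\<lambda>(a,b). (f a, f b)) (prs p)"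
  by (simp add: prs_def zip_map_map map_tl[symmetric])

lemma conc:
  assumes "P \<noteq> []" "Q \<noteq> []" "last P = hd Q"
  shows "is_path n (P @ tl Q) \<longleftrightarrow> is_path n P \<and> is_path n Q"
    "dirs (P @ tl Q) = dirs P @ dirs Q" "edg (P @ tl Q) = edg P @ edg Q"
    "last (P @ tl Q) = last Q" "hd (P @ tl Q) = hd P"
proof -
  have sQ: "set Q = insert (hd Q) (set (tl Q))" using assms(2) by (cases Q) auto
  have hP: "hd Q \<in> set P" using assms by (metis last_in_set)
  have "set (P @ tl Q) = set P \<union> set Q" using sQ hP by auto
  then show "is_path n (P @ tl Q) \<longleftrightarrow> is_path n P \<and> is_path n Q"
    using assms by (auto simp: is_path_prs prs_conc)
  show "dirs (P @ tl Q) = dirs P @ dirs Q" "edg (P @ tl Q) = edg P @ edg Q"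
    using assms by (auto simp: dirs_def edg_def prs_conc)
  show "last (P @ tl Q) = last Q" using assms by (cases Q) auto
  show "hd (P @ tl Q) = hd P" using assms by simp
qed

lemma edg_sub: "e \<in> set (edg p) \<Longrightarrow> \<exists>a b. e = {a,b} \<and> (a,b) \<in> set (prs p)"
  by (auto simp: edg_def)

lemma prs_set: "(a,b) \<in> set (prs p) \<Longrightarrow> a \<in> set p \<and> b \<in> set p"
proof -
  assume H: "(a,b) \<in> set (prs p)"
  have "set (tl p) \<subseteq> set p" by (cases p) auto
  then show ?thesis using H unfolding prs_def by (auto dest: set_zip_leftD set_zip_rightD)
qed

lemma path_edge_cube: "is_path n p \<Longrightarrow> e \<in> set (edg p) \<Longrightarrow> e \<in> cube_edges n"
proof -
  assume P: "is_path n p" and E: "e \<in> set (edg p)"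
  obtain a b where ab: "e = {a,b}" "(a,b) \<in> set (prs p)" using edg_sub[OF E] by blast
  have "adjacent n a b" using P ab(2) unfolding is_path_prs by blast
  then show ?thesis unfolding cube_edges_def ab(1) by blast
qed

lemma path_antipode:
  assumes "is_path n p"
  shows "is_path n (map antipode p)" "dirs (map antipode p) = dirs p"
    "edg (map antipode p) = map antipodal_edge (edg p)"
proof -
  have A: "\<And>a b. (a,b) \<in> set (prs p) \<Longrightarrow> adjacent n a b" using assms by (auto simp: is_path_prs)
  show "is_path n (map antipode p)" using assms A adj_antipode(1)
    by (auto simp: is_path_prs prs_map cube_vertices_def)
  show "dirs (map antipode p) = dirs p" unfolding dirs_def prs_map
    by (auto intro!: map_cong simp: adj_antipode(2)[OF A])
  show "edg (map antipode p) = map antipodal_edge (edg p)"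
    unfolding edg_def prs_map by (auto simp: antipodal_edge_def)
qed

lemma path_tl:
  assumes "is_path (Suc n) p" "\<forall>v\<in>set p. hd v = h"
  shows "is_path n (map tl p)" "dirs (map tl p) = map (\<lambda>d. d - 1) (dirs p)"
    "0 \<notin> set (dirs p)" "edg (map tl p) = map ((`) tl) (edg p)"
proof -
  have A: "\<And>a b. (a,b) \<in> set (prs p) \<Longrightarrow> adjacent (Suc n) a b \<and> hd a = hd b"
    using assms prs_set by (fastforce simp: is_path_prs)
  have A1: "\<And>a b. (a,b) \<in> set (prs p) \<Longrightarrow> adjacent (Suc n) a b" using A by blast
  have A2: "\<And>a b. (a,b) \<in> set (prs p) \<Longrightarrow> hd a = hd b" using A by blast
  show "is_path n (map tl p)" using assms A adj_tl_same(1)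
    by (auto simp: is_path_prs prs_map cube_vertices_def)
  show "dirs (map tl p) = map (\<lambda>d. d - 1) (dirs p)" unfolding dirs_def prs_map
    by (auto intro!: map_cong simp: adj_tl_same(2)[OF A1 A2])
  show "0 \<notin> set (dirs p)" unfolding dirs_def using A adj_tl_same(3) by fastforce
  show "edg (map tl p) = map ((`) tl) (edg p)"
    unfolding edg_def prs_map by auto
qed

lemma const_along:
  "p \<noteq> [] \<Longrightarrow> \<forall>(a,b)\<in>set (prs p). f a = f b \<Longrightarrow> \<forall>x\<in>set p. f x = f (hd p)"
proof (induction p)
  case Nil then show ?case by simp
next
  case (Cons a p)
  show ?case
  proof (cases p)
    case Nil then show ?thesis by simp
  next
    case (Cons b q)
    have "\<forall>x\<in>set p. f x = f (hd p)"
      using Cons.IH Cons.prems \<open>p = b # q\<close> by (auto simp: prs_def)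
    moreover have "f a = f b" using Cons.prems \<open>p = b # q\<close> by (auto simp: prs_def)
    ultimately show ?thesis using \<open>p = b # q\<close> by auto
  qed
qed

lemma map_const: "\<forall>x\<in>set xs. f x = v \<Longrightarrow> map f xs = replicate (length xs) v"
  by (induction xs) auto

lemma geo_unf: "geodesic_between n p x y \<longleftrightarrow> is_path n p \<and> distinct (dirs p) \<and> hd p = x \<and> last p = y"
  by (simp add: geodesic_between_def geodesic_def path_directions_dirs)

lemma BA:
  assumes ac: "antipodal_colouring n c" and geo: "geodesic_between n q x (antipode x)"
    and ch: "changes_colour_at_most_once c q"
  shows "\<exists>x p. x \<in> cube_vertices n \<and> geodesic_between n p x (antipode x) \<and> monochromatic c p"
proof -
  obtain b k m where col: "map c (edg q) = replicate k b @ replicate m (\<not>b)"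
    using ch by (auto simp: changes_colour_at_most_once_def path_edges_edg)
  have pq: "is_path n q" "distinct (dirs q)" "hd q = x" "last q = antipode x" using geo by (auto simp: geo_unf)
  have qne: "q \<noteq> []" using pq by (auto simp: is_path_def)
  have "length q - 1 = k + m" using arg_cong[OF col, of length] by (simp add: length_edg)
  then have kl: "k < length q" using qne by (cases q) auto
  define q1 where "q1 = take (Suc k) q"
  define q2 where "q2 = drop k q"
  have ne: "q1 \<noteq> []" "q2 \<noteq> []" using kl qne by (auto simp: q1_def q2_def)
  have lh: "last q1 = hd q2" using kl by (simp add: q1_def q2_def take_Suc_conv_app_nth hd_drop_conv_nth)
  have qq: "q1 @ tl q2 = q" unfolding q1_def q2_def by (metis append_take_drop_id drop_Suc tl_drop)
  note C = conc[OF ne lh]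
  have p1: "is_path n q1" "is_path n q2" using C(1) pq(1) unfolding qq by auto
  have dq: "dirs q = dirs q1 @ dirs q2" "edg q = edg q1 @ edg q2" using C(2,3) unfolding qq by auto
  have le1: "length (edg q1) = k" using kl by (simp add: length_edg q1_def)
  have cc: "map c (edg q1) = replicate k b" "map c (edg q2) = replicate m (\<not>b)"
    using col dq(2) le1 by (auto simp: append_eq_append_conv)
  define r where "r = map antipode q2 @ tl q1"
  have lq2: "last q2 = last q" using kl by (simp add: q2_def last_drop)
  have ne2: "map antipode q2 \<noteq> []" "q1 \<noteq> []" using ne by auto
  have lh2: "last (map antipode q2) = hd q1"
    using ne lq2 pq qq by (metis antipode_antipode hd_append2 last_map)
  note D = conc[OF ne2 lh2]
  note E = path_antipode[OF p1(2)]
  have rp: "is_path n r" using D(1) E(1) p1 by (simp add: r_def)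
  have rd: "distinct (dirs r)" using D(2) E(2) pq(2) dq(1) by (auto simp: r_def)
  have re: "edg r = map antipodal_edge (edg q2) @ edg q1" using D(3) E(3) by (simp add: r_def)
  have mono: "\<forall>e\<in>set (edg r). c e = b"
  proof
    fix e assume "e \<in> set (edg r)"
    then consider "e \<in> set (edg q1)" | e0 where "e0 \<in> set (edg q2)" "e = antipodal_edge e0"
      using re by auto
    then show "c e = b"
    proof cases
      case 1 then show ?thesis using cc(1) by (metis in_set_replicate image_eqI list.set_map)
    next
      case 2
      have "c e0 = (\<not>b)" using cc(2) 2(1) by (metis in_set_replicate image_eqI list.set_map)
      moreover have "e0 \<in> cube_edges n" using path_edge_cube[OF p1(2) 2(1)] .
      ultimately show ?thesis using ac 2(2) by (auto simp: antipodal_colouring_def)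
    qed
  qed
  have hr: "hd r = antipode (q ! k)" using D(5) ne kl by (simp add: r_def q2_def hd_map hd_drop_conv_nth)
  have lr: "last r = q ! k" using D(4) kl by (simp add: r_def q1_def take_Suc_conv_app_nth)
  have "q ! k \<in> cube_vertices n" using pq(1) kl by (auto simp: is_path_def)
  then have "antipode (q ! k) \<in> cube_vertices n" by (simp add: cube_vertices_def)
  moreover have "geodesic_between n r (antipode (q ! k)) (antipode (antipode (q ! k)))"
    using rp rd hr lr by (simp add: geo_unf)
  moreover have "monochromatic c r" using mono by (auto simp: monochromatic_def path_edges_edg)
  ultimately show ?thesis by blast
qed

definition lift :: "(bool list set \<Rightarrow> bool) \<Rightarrow> bool list set \<Rightarrow> bool" where
  "lift c e = (if (\<forall>v\<in>e. \<not> hd v) then c (tl ` e)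
     else if (\<forall>v\<in>e. hd v) then \<not> c (antipodal_edge (tl ` e)) else (\<exists>v\<in>e. v ! 1))"

lemma hd_antipode: "x \<noteq> [] \<Longrightarrow> hd (antipode x) = (\<not> hd x)"
  by (cases x) (auto simp: antipode_def)

lemma tl_antipode: "tl (antipode x) = antipode (tl x)"
  by (cases x) (auto simp: antipode_def)

lemma lift_antipodal:
  assumes "n \<ge> 1"
  shows "antipodal_colouring (Suc n) (lift c)"
  unfolding antipodal_colouring_def
proof
  fix e assume "e \<in> cube_edges (Suc n)"
  then obtain a b where e: "e = {a,b}" and ad: "adjacent (Suc n) a b" by (auto simp: cube_edges_def)
  note D = adj_dir[OF ad]
  have ne: "a \<noteq> []" "b \<noteq> []" using D by auto
  have ae: "antipodal_edge e = {antipode a, antipode b}" by (simp add: e antipodal_edge_def)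
  have ha: "hd (antipode a) = (\<not> hd a)" "hd (antipode b) = (\<not> hd b)" using ne by (simp_all add: hd_antipode)
  have tle: "tl ` antipodal_edge e = antipodal_edge (tl ` e)"
    by (simp add: ae e antipodal_edge_def tl_antipode)
  have aae: "antipodal_edge (antipodal_edge E) = E" for E
    by (simp add: antipodal_edge_def image_image)
  have tl2: "tl ` {antipode a, antipode b} = antipodal_edge (tl ` {a,b})"
    by (simp add: antipodal_edge_def tl_antipode)
  have aae: "antipodal_edge (antipodal_edge E) = E" for E
    by (simp add: antipodal_edge_def image_image)
  have "lift c {a,b} \<noteq> lift c {antipode a, antipode b}"
  proof (cases "hd a = hd b")
    case True
    show ?thesis
    proof (cases "hd a")
      case False
      have l1: "lift c {a,b} = c (tl ` {a,b})" using False True by (simp add: lift_def)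
      have l2: "lift c {antipode a, antipode b} = (\<not> c (antipodal_edge (tl ` {antipode a, antipode b})))"
        using False True ha by (simp add: lift_def)
      show ?thesis unfolding l1 l2 tl2 aae by simp
    next
      case hT: True
      have l1: "lift c {a,b} = (\<not> c (antipodal_edge (tl ` {a,b})))" using hT True by (simp add: lift_def)
      have l2: "lift c {antipode a, antipode b} = c (tl ` {antipode a, antipode b})"
        using hT True ha by (simp add: lift_def)
      show ?thesis unfolding l1 l2 tl2 by simp
    qed
  next
    case False
    have t: "tl a = tl b" using adj_tl_diff[OF ad False] by simp
    have "tl a ! 0 = a ! 1" "tl b ! 0 = b ! 1" using D(1,2) assms by (simp_all add: nth_tl)
    then have "a ! 1 = b ! 1" using t by simp
    moreover have "antipode a ! 1 = (\<not> a ! 1)" "antipode b ! 1 = (\<not> b ! 1)"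
      using D(1,2) assms by (auto simp: antipode_def)
    ultimately show ?thesis using False ha by (auto simp: lift_def)
  qed
  then show "lift c e \<noteq> lift c (antipodal_edge e)" unfolding ae unfolding e .
qed

lemma AB_core:
  assumes pp: "is_path (Suc n) p" and dp: "distinct (dirs p)" and hp: "hd p = y"
    and lp: "last p = antipode y" and hy: "\<not> hd y" and yv: "y \<in> cube_vertices (Suc n)"
    and col: "\<forall>e\<in>set (edg p). lift c e = b"
  shows "\<exists>x r. x \<in> cube_vertices n \<and> geodesic_between n r x (antipode x) \<and> changes_colour_at_most_once c r"
proof -
  have pne: "p \<noteq> []" using pp by (simp add: is_path_def)
  have yne: "y \<noteq> []" using yv by (auto simp: cube_vertices_def)
  have hly: "hd (last p) = True" using lp yne hy by (simp add: hd_antipode)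
  define p1 where "p1 = takeWhile (\<lambda>v. \<not> hd v) p"
  define p2 where "p2 = dropWhile (\<lambda>v. \<not> hd v) p"
  have pe: "p1 @ p2 = p" by (simp add: p1_def p2_def)
  have p1ne: "p1 \<noteq> []" using pne hp hy by (simp add: p1_def takeWhile_eq_Nil_iff)
  have h1: "\<forall>v\<in>set p1. \<not> hd v" by (auto simp: p1_def dest: set_takeWhileD)
  have p2ne: "p2 \<noteq> []"
  proof
    assume "p2 = []"
    then have "last p \<in> set p1" using pe pne by (metis append_Nil2 last_in_set)
    then show False using h1 hly by auto
  qed
  have hh2: "hd (hd p2)" using p2ne by (metis hd_dropWhile p2_def)
  define Q where "Q = last p1 # p2"
  have Qe: "p1 @ tl Q = p" using pe by (simp add: Q_def)
  have Qne: "Q \<noteq> []" and lQ: "last p1 = hd Q" by (simp_all add: Q_def)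
  note C1 = conc[OF p1ne Qne lQ]
  have C1': "is_path (Suc n) p1" "is_path (Suc n) Q" "dirs p = dirs p1 @ dirs Q" "edg p = edg p1 @ edg Q"
    using C1 pp unfolding Qe by auto
  have Qe2: "[last p1, hd p2] @ tl p2 = Q" using p2ne by (simp add: Q_def)
  have n3: "[last p1, hd p2] \<noteq> []" and l3: "last [last p1, hd p2] = hd p2" by simp_all
  note C2 = conc[OF n3 p2ne l3, unfolded Qe2]
  have C2': "is_path (Suc n) [last p1, hd p2]" "is_path (Suc n) p2"
     "dirs Q = direction (last p1) (hd p2) # dirs p2" "edg Q = {last p1, hd p2} # edg p2"
    using C2 C1'(2) by (auto simp: dirs_def edg_def prs_def)
  have adv: "adjacent (Suc n) (last p1) (hd p2)" using C2'(1) by (simp add: is_path_prs prs_def)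
  have hdiff: "hd (last p1) \<noteq> hd (hd p2)" using h1 hh2 p1ne by auto
  note V = adj_tl_diff[OF adv hdiff]
  have dall: "distinct (dirs p1 @ 0 # dirs p2)" using dp C1'(3) C2'(3) V(1) by simp
  have h2: "\<forall>v\<in>set p2. hd v"
  proof -
    have "\<forall>(a,b)\<in>set (prs p2). hd a = hd b"
    proof (clarify)
      fix a b assume ab: "(a,b) \<in> set (prs p2)"
      have ad: "adjacent (Suc n) a b" using C2'(2) ab by (auto simp: is_path_prs)
      show "hd a = hd b"
      proof (rule ccontr)
        assume "hd a \<noteq> hd b"
        then have "direction a b = 0" using adj_tl_diff(1)[OF ad] by simp
        then have "0 \<in> set (dirs p2)" using ab unfolding dirs_def by force
        then show False using dall by simp
      qed
    qed
    from const_along[OF p2ne this] show ?thesis using hh2 by simp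
  qed
  have h1': "\<forall>v\<in>set p1. hd v = False" using h1 by simp
  have h2': "\<forall>v\<in>set p2. hd v = True" using h2 by simp
  note T1 = path_tl[OF C1'(1) h1']
  note T2 = path_tl[OF C2'(2) h2']
  define P1 where "P1 = map tl p1"
  define P2 where "P2 = map antipode (map tl p2)"
  note A2 = path_antipode[OF T2(1)]
  have P2ne: "P2 \<noteq> []" "P1 \<noteq> []" using p1ne p2ne by (auto simp: P1_def P2_def)
  have lp2: "last p2 = last p" using pe p2ne by (metis last_append)
  have hp1: "hd p1 = y" using pe p1ne hp by (metis hd_append2)
  have lh: "last P2 = hd P1"
    by (simp add: P1_def P2_def last_map hd_map p2ne p1ne lp2 lp tl_antipode hp1)
  note D = conc[OF P2ne lh]
  define r where "r = P2 @ tl P1"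
  have rp: "is_path n r" using D(1) A2(1) T1(1) unfolding r_def P1_def P2_def by simp
  have rdirs: "dirs r = map (\<lambda>d. d - 1) (dirs p2 @ dirs p1)"
    using D(2) A2(2) T1(2) T2(2) by (simp add: r_def P1_def P2_def)
  have z: "0 \<notin> set (dirs p2 @ dirs p1)" using dall by auto
  have "inj_on (\<lambda>d. d - 1) (set (dirs p2 @ dirs p1))"
    using z unfolding inj_on_def by (metis Suc_pred' gr0I)
  moreover have "distinct (dirs p2 @ dirs p1)" using dall by auto
  ultimately have rd: "distinct (dirs r)" unfolding rdirs by (subst distinct_map) blast
  have redg: "edg r = map antipodal_edge (map ((`) tl) (edg p2)) @ map ((`) tl) (edg p1)"
    using D(3) A2(3) T1(4) T2(4) by (simp add: r_def P1_def P2_def)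
  have esub: "\<And>e q. e \<in> set (edg q) \<Longrightarrow> e \<subseteq> set q \<and> e \<noteq> {}"
    using edg_sub prs_set by fastforce
  have m1: "map c (map ((`) tl) (edg p1)) = replicate (length (map ((`) tl) (edg p1))) b"
  proof (rule map_const, rule ballI)
    fix e' assume "e' \<in> set (map ((`) tl) (edg p1))"
    then obtain e where e: "e \<in> set (edg p1)" "e' = tl ` e" by auto
    have "lift c e = b" using col e(1) C1'(4) by auto
    moreover have "\<forall>v\<in>e. \<not> hd v" using esub[OF e(1)] h1 by auto
    ultimately show "c e' = b" using e(2) by (simp add: lift_def)
  qed
  have m2: "map c (map antipodal_edge (map ((`) tl) (edg p2))) = replicate (length (map antipodal_edge (map ((`) tl) (edg p2)))) (\<not> b)"
  proof (rule map_const, rule ballI)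
    fix e' assume "e' \<in> set (map antipodal_edge (map ((`) tl) (edg p2)))"
    then obtain e where e: "e \<in> set (edg p2)" "e' = antipodal_edge (tl ` e)" by auto
    have "lift c e = b" using col e(1) C1'(4) C2'(4) by auto
    moreover have "\<forall>v\<in>e. hd v" "e \<noteq> {}" using esub[OF e(1)] h2 by auto
    ultimately show "c e' = (\<not> b)" using e(2) by (auto simp: lift_def)
  qed
  have ch: "changes_colour_at_most_once c r"
    unfolding changes_colour_at_most_once_def path_edges_edg redg map_append m1 m2
    by (rule exI[of _ "\<not> b"], rule exI, rule exI) simp
  have hr: "hd r = antipode (tl (hd p2))" using D(5) p2ne by (simp add: r_def P2_def hd_map)
  have lr: "last r = tl (hd p2)" using D(4) p1ne V(2) by (simp add: r_def P1_def last_map)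
  have "hd p2 \<in> set p" using pe p2ne by (metis Un_iff hd_in_set set_append)
  then have "antipode (tl (hd p2)) \<in> cube_vertices n" using pp by (auto simp: is_path_def cube_vertices_def)
  moreover have "geodesic_between n r (antipode (tl (hd p2))) (antipode (antipode (tl (hd p2))))"
    using rp rd hr lr by (simp add: geo_unf)
  ultimately show ?thesis using ch by blast
qed

lemma AB:
  assumes n1: "n \<ge> 1"
    and A: "\<forall>c. antipodal_colouring (Suc n) c \<longrightarrow>
            (\<exists>x p. x \<in> cube_vertices (Suc n) \<and> geodesic_between (Suc n) p x (antipode x) \<and> monochromatic c p)"
  shows "\<exists>x p. x \<in> cube_vertices n \<and> geodesic_between n p x (antipode x) \<and> changes_colour_at_most_once c p"
proof -
  have ac: "antipodal_colouring (Suc n) (lift c)" using lift_antipodal[OF n1] .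
  then obtain y p where y: "y \<in> cube_vertices (Suc n)" and g: "geodesic_between (Suc n) p y (antipode y)"
    and m: "monochromatic (lift c) p" using A by blast
  obtain b where mb: "\<forall>e\<in>set (edg p). lift c e = b" using m by (auto simp: monochromatic_def path_edges_edg)
  have pp: "is_path (Suc n) p" "distinct (dirs p)" "hd p = y" "last p = antipode y" using g by (auto simp: geo_unf)
  have yne: "y \<noteq> []" using y by (auto simp: cube_vertices_def)
  show ?thesis
  proof (cases "hd y")
    case False
    show ?thesis by (rule AB_core[OF pp False y mb])
  next
    case True
    note E = path_antipode[OF pp(1)]
    have pne: "p \<noteq> []" using pp(1) by (simp add: is_path_def)
    have mb': "\<forall>e\<in>set (edg (map antipode p)). lift c e = (\<not> b)"
    proof
      fix e assume "e \<in> set (edg (map antipode p))"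
      then obtain e0 where e0: "e0 \<in> set (edg p)" "e = antipodal_edge e0" using E(3) by auto
      have "e0 \<in> cube_edges (Suc n)" using path_edge_cube[OF pp(1) e0(1)] .
      then show "lift c e = (\<not> b)" using ac e0 mb by (auto simp: antipodal_colouring_def)
    qed
    show ?thesis
    proof (rule AB_core[OF E(1) _ _ _ _ _ mb'])
      show "distinct (dirs (map antipode p))" using E(2) pp(2) by simp
      show "hd (map antipode p) = antipode y" using pne pp(3) by (simp add: hd_map)
      show "last (map antipode p) = antipode (antipode y)" using pne pp(4) by (simp add: last_map)
      show "\<not> hd (antipode y)" using True yne by (simp add: hd_antipode)
      show "antipode y \<in> cube_vertices (Suc n)" using y by (simp add: cube_vertices_def)
    qed
  qed
qed

theorem proposition13:
  shows "(\<forall>n\<ge>1. \<forall>c. antipodal_colouring n c \<longrightarrow>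
            (\<exists>x p. x \<in> cube_vertices n \<and> geodesic_between n p x (antipode x) \<and> monochromatic c p))
     \<longleftrightarrow>
         (\<forall>n\<ge>1. \<forall>c.
            (\<exists>x p. x \<in> cube_vertices n \<and> geodesic_between n p x (antipode x) \<and> changes_colour_at_most_once c p))"
proof
  assume A: "\<forall>n\<ge>1. \<forall>c. antipodal_colouring n c \<longrightarrow>
            (\<exists>x p. x \<in> cube_vertices n \<and> geodesic_between n p x (antipode x) \<and> monochromatic c p)"
  show "\<forall>n\<ge>1. \<forall>c.
            (\<exists>x p. x \<in> cube_vertices n \<and> geodesic_between n p x (antipode x) \<and> changes_colour_at_most_once c p)"
  proof (intro allI impI)
    fix n :: nat and c assume n1: "n \<ge> 1"
    have "Suc n \<ge> 1" by simp
    then show "\<exists>x p. x \<in> cube_vertices n \<and> geodesic_between n p x (antipode x) \<and> changes_colour_at_most_once c p"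
      using AB[OF n1] A by blast
  qed
next
  assume B: "\<forall>n\<ge>1. \<forall>c.
            (\<exists>x p. x \<in> cube_vertices n \<and> geodesic_between n p x (antipode x) \<and> changes_colour_at_most_once c p)"
  show "\<forall>n\<ge>1. \<forall>c. antipodal_colouring n c \<longrightarrow>
            (\<exists>x p. x \<in> cube_vertices n \<and> geodesic_between n p x (antipode x) \<and> monochromatic c p)"
  proof (intro allI impI)
    fix n :: nat and c assume n1: "n \<ge> 1" and ac: "antipodal_colouring n c"
    obtain x q where "x \<in> cube_vertices n" "geodesic_between n q x (antipode x)" "changes_colour_at_most_once c q"
      using B n1 by blast
    then show "\<exists>x p. x \<in> cube_vertices n \<and> geodesic_between n p x (antipode x) \<and> monochromatic c p"
      using BA[OF ac] by blast
  qed
qed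

end
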